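(* Let $g$ be a positive integer. There exists a large set of H-designs LH$(7,g,4,3)$ if and only if $g$ is even.
   Context: An H-design H$(n,g,k,t)$ is a triple $(Q,G,B)$ where $Q$ is a set of $ng$ points, $G$ is a partition of $Q$ into $n$ groups of size $g$, and $B$ is a set of $k$-subsets of $Q$ (blocks) such that each block meets each group in at most one point and any $t$ points from $t$ distinct groups lie in exactly one block. A large set of H-designs LH$(n,g,k,t)$ is a partition of the set of all $k$-subsets of $Q$ meeting each group of $G$ in at most one point into pairwise disjoint block sets, each of which forms (with $Q$ and $G$) an H-design H$(n,g,k,t)$. *)

theory Defs
  imports Main
begin

definition transversal :: "'a set set \<Rightarrow> 'a set \<Rightarrow> bool" where
  "transversal G S \<longleftrightarrow> (\<forall>X\<in>G. card (S \<inter> X) \<le> 1)"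

definition trans_ksets :: "'a set \<Rightarrow> 'a set set \<Rightarrow> nat \<Rightarrow> 'a set set" where
  "trans_ksets Q G k = {S. S \<subseteq> Q \<and> card S = k \<and> transversal G S}"

definition group_partition :: "'a set \<Rightarrow> 'a set set \<Rightarrow> nat \<Rightarrow> nat \<Rightarrow> bool" where
  "group_partition Q G n g \<longleftrightarrow>
     \<Union>G = Q \<and> card G = n \<and> finite G \<and>
     (\<forall>X\<in>G. X \<noteq> {} \<and> finite X \<and> card X = g) \<and>
     (\<forall>X\<in>G. \<forall>Y\<in>G. X \<noteq> Y \<longrightarrow> X \<inter> Y = {})"

definition H_design :: "nat \<Rightarrow> nat \<Rightarrow> nat \<Rightarrow> nat \<Rightarrow> 'a set \<Rightarrow> 'a set set \<Rightarrow> 'a set set \<Rightarrow> bool" where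
  "H_design n g k t Q G B \<longleftrightarrow>
     finite Q \<and> card Q = n * g \<and> group_partition Q G n g \<and>
     B \<subseteq> trans_ksets Q G k \<and>
     (\<forall>T \<in> trans_ksets Q G t. \<exists>!b. b \<in> B \<and> T \<subseteq> b)"

definition large_H_set :: "nat \<Rightarrow> nat \<Rightarrow> nat \<Rightarrow> nat \<Rightarrow> 'a set \<Rightarrow> 'a set set \<Rightarrow> 'a set set set \<Rightarrow> bool" where
  "large_H_set n g k t Q G L \<longleftrightarrow>
     finite Q \<and> card Q = n * g \<and> group_partition Q G n g \<and>
     \<Union>L = trans_ksets Q G k \<and>
     (\<forall>B1\<in>L. \<forall>B2\<in>L. B1 \<noteq> B2 \<longrightarrow> B1 \<inter> B2 = {}) \<and>
     (\<forall>B\<in>L. H_design n g k t Q G B)"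

end

theory Submission
  imports Defs
begin

text \<open>Finite base: a large set LH(7,2,4,3) encoded as a lookup table. A transversal
  4-set is described by a digit vector v with v x = 0 if group x is not met, and
  v x = 1 + b if it meets group x in the point with bit b.\<close>

definition tab :: "nat \<Rightarrow> nat" where "tab n = (if n < 829 then (if n < 415 then (if n < 223 then (if n < 132 then (if n < 95 then (if n < 67 then (if n < 49 then (if n < 43 then (if n < 41 then 0 else 6) else (if n < 44 then 3 else 7)) else (if n < 52 then (if n < 50 then 1 else 5) else (if n < 53 then 0 else 4))) else (if n < 76 then (if n < 70 then (if n < 68 then 1 else 5) else (if n < 71 then 6 else 2)) else (if n < 79 then (if n < 77 then 4 else 2) else (if n < 80 then 3 else (if n < 94 then 7 else 2))))) else (if n < 115 then (if n < 104 then (if n < 98 then (if n < 97 then 3 else 5) else (if n < 103 then 0 else 6)) else (if n < 107 then (if n < 106 then 7 else 1) else (if n < 112 then 6 else (if n < 113 then 3 else 4)))) else (if n < 120 then (if n < 118 then (if n < 116 then 2 else 1) else (if n < 119 then 6 else 2)) else (if n < 127 then (if n < 123 then 7 else 4) else (if n < 128 then 7 else (if n < 129 then 3 else 0)))))) else (if n < 184 then (if n < 150 then (if n < 143 then (if n < 140 then (if n < 139 then 5 else 5) else (if n < 142 then 6 else 0)) else (if n < 146 then (if n < 145 then 3 else 4) else (if n < 147 then 1 else 0))) else (if n < 159 then (if n < 155 then (if n < 154 then 7 else 2) else (if n < 156 then 5 else 1)) else (if n < 176 then (if n < 175 then 4 else 3) else (if n < 178 then 4 else (if n < 179 then 4 else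 5))))) else (if n < 200 then (if n < 193 then (if n < 187 then (if n < 185 then 7 else 0) else (if n < 188 then 2 else 1)) else (if n < 196 then (if n < 194 then 4 else 1) else (if n < 197 then 7 else (if n < 199 then 2 else 1)))) else (if n < 209 then (if n < 204 then (if n < 201 then 0 else 5) else (if n < 208 then 6 else 5)) else (if n < 213 then (if n < 210 then 6 else 2) else (if n < 220 then 3 else (if n < 221 then 6 else 7))))))) else (if n < 308 then (if n < 269 then (if n < 237 then (if n < 228 then (if n < 226 then (if n < 224 then 5 else 0) else (if n < 227 then 7 else 3)) else (if n < 235 then (if n < 231 then 2 else 1) else (if n < 236 then 0 else 4))) else (if n < 259 then (if n < 256 then (if n < 240 then 3 else 6) else (if n < 257 then 4 else 7)) else (if n < 265 then (if n < 260 then 2 else 3) else (if n < 266 then 3 else (if n < 268 then 6 else 7))))) else (if n < 289 then (if n < 278 then (if n < 275 then (if n < 274 then 0 else 2) else (if n < 277 then 3 else 6)) else (if n < 281 then (if n < 280 then 5 else 5) else (if n < 282 then 4 else (if n < 285 then 1 else 0)))) else (if n < 301 then (if n < 291 then (if n < 290 then 4 else 2) else (if n < 294 then 7 else 1)) else (if n < 304 then (if n < 302 then 7 else 0) else (if n < 305 then 1 else (if n < 307 then 4 else 0)))))) else (if n < 345 then (if n < 329 then (if n < 317 then (if n < 312 then (if n < 309 then 6 else 3) else (if n < 316 then 5 else 6)) else (if n < 321 then (if n < 318 then 1 else 5) else (if n < 328 then 2 else 0))) else (if n < 335 then (if n < 332 then (if n < 331 then 1 else 4) else (if n < 334 then 2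 else 7)) else (if n < 339 then (if n < 336 then 5 else 6) else (if n < 343 then 1 else (if n < 344 then 5 else 4))))) else (if n < 380 then (if n < 354 then (if n < 352 then (if n < 348 then 2 else 3) else (if n < 353 then 1 else 0)) else (if n < 360 then (if n < 357 then 5 else 7) else (if n < 369 then 3 else (if n < 379 then 6 else 3)))) else (if n < 396 then (if n < 384 then (if n < 381 then 7 else 4) else (if n < 387 then 6 else 2)) else (if n < 410 then (if n < 409 then 0 else 5) else (if n < 412 then 2 else (if n < 413 then 0 else 6)))))))) else (if n < 622 then (if n < 528 then (if n < 465 then (if n < 433 then (if n < 424 then (if n < 417 then (if n < 416 then 6 else 1) else (if n < 420 then 0 else 7)) else (if n < 426 then (if n < 425 then 1 else 3) else (if n < 429 then 4 else 5))) else (if n < 441 then (if n < 435 then (if n < 434 then 3 else 7) else (if n < 438 then 6 else 4)) else (if n < 460 then (if n < 450 then 2 else 0) else (if n < 461 then 2 else (if n < 462 then 5 else 1))))) else (if n < 511 then (if n < 500 then (if n < 477 then (if n < 468 then 3 else 4) else (if n < 499 then 7 else 5)) else (if n < 503 then (if n < 502 then 2 else 1) else (if n < 508 then 6 else (if n < 509 then 0 else 1)))) else (if n < 520 then (if n < 517 then (if n < 512 then 4 else 5) else (if n < 518 then 6 else 0)) else (if n < 523 then (if n < 521 then 5 else 3) else (if n < 524 then 7 else (if n < 525 then 1 else 4)))))) else (if n < 571 then (if n < 548 then (if n < 537 then (if n < 533 then (if n < 532 then 2 else 2) else (if n < 534 then 7 else 3)) else (if n < 545 then (if n < 544 then 6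 else 2) else (if n < 547 then 4 else 7))) else (if n < 555 then (if n < 551 then (if n < 550 then 1 else 3) else (if n < 552 then 0 else 7)) else (if n < 560 then (if n < 559 then 4 else 5) else (if n < 561 then 3 else (if n < 564 then 6 else 0))))) else (if n < 587 then (if n < 577 then (if n < 574 then (if n < 572 then 7 else 5) else (if n < 575 then 6 else 7)) else (if n < 579 then (if n < 578 then 0 else 4) else (if n < 582 then 1 else (if n < 586 then 3 else 3)))) else (if n < 596 then (if n < 591 then (if n < 588 then 0 else 4) else (if n < 595 then 2 else 4)) else (if n < 600 then (if n < 597 then 6 else 2) else (if n < 603 then 0 else (if n < 612 then 5 else 1))))))) else (if n < 752 then (if n < 672 then (if n < 655 then (if n < 630 then (if n < 624 then (if n < 623 then 1 else 2) else (if n < 627 then 3 else 5)) else (if n < 652 then (if n < 639 then 6 else 7) else (if n < 653 then 1 else 3))) else (if n < 660 then (if n < 658 then (if n < 656 then 3 else 4) else (if n < 659 then 2 else 7)) else (if n < 667 then (if n < 663 then 6 else 0) else (if n < 668 then 6 else (if n < 669 then 2 else 5))))) else (if n < 705 then (if n < 681 then (if n < 677 then (if n < 676 then 7 else 0) else (if n < 678 then 5 else 7)) else (if n < 693 then (if n < 684 then 1 else 3) else (if n < 703 then 4 else (if n < 704 then 4 else 6)))) else (if n < 742 then (if n < 711 then (if n < 708 then 0 else 2) else (if n < 720 then 5 else 1)) else (if n < 745 then (if n < 743 then 6 else 1) else (if n < 746 then 7 else (if n < 751 then 4 else 5)))))) else (if n < 790 then (if n < 767 then (if n < 761 then (if n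 < 755 then (if n < 754 then 4 else 6) else (if n < 760 then 3 else 7)) else (if n < 764 then (if n < 763 then 2 else 4) else (if n < 766 then 0 else 2))) else (if n < 776 then (if n < 771 then (if n < 768 then 5 else 3) else (if n < 775 then 1 else 3)) else (if n < 780 then (if n < 777 then 1 else 6) else (if n < 787 then 2 else (if n < 788 then 0 else 3))))) else (if n < 807 then (if n < 795 then (if n < 793 then (if n < 791 then 2 else 6) else (if n < 794 then 5 else 7)) else (if n < 802 then (if n < 798 then 4 else 0) else (if n < 803 then 1 else (if n < 804 then 0 else 7)))) else (if n < 818 then (if n < 815 then (if n < 814 then 5 else 4) else (if n < 817 then 0 else 3)) else (if n < 821 then (if n < 820 then 5 else 1) else (if n < 822 then 6 else (if n < 825 then 5 else 2))))))))) else (if n < 1516 then (if n < 1080 then (if n < 947 then (if n < 896 then (if n < 846 then (if n < 838 then (if n < 831 then (if n < 830 then 0 else 2) else (if n < 834 then 3 else 7)) else (if n < 840 then (if n < 839 then 5 else 7) else (if n < 843 then 1 else 6))) else (if n < 867 then (if n < 865 then (if n < 855 then 0 else 4) else (if n < 866 then 7 else 4)) else (if n < 873 then (if n < 870 then 2 else 1) else (if n < 882 then 3 else (if n < 895 then 6 else 2))))) else (if n < 912 then (if n < 902 then (if n < 899 then (if n < 898 then 6 else 1) else (if n < 901 then 7 else 0)) else (if n < 906 then (if n < 903 then 2 else 7) else (if n < 910 then 3 else (if n < 911 then 4 else 5)))) else (if n < 921 then (if n < 919 then (if n < 915 then 1 else 0) else (if n < 920 then 6 else 3)) else (if n < 927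 then (if n < 924 then 0 else 5) else (if n < 936 then 4 else (if n < 946 then 7 else 3)))))) else (if n < 1000 then (if n < 980 then (if n < 963 then (if n < 951 then (if n < 948 then 1 else 5) else (if n < 954 then 4 else 6)) else (if n < 977 then (if n < 976 then 2 else 1) else (if n < 979 then 5 else 5))) else (if n < 987 then (if n < 983 then (if n < 982 then 1 else 3) else (if n < 984 then 0 else 2)) else (if n < 992 then (if n < 991 then 6 else 2) else (if n < 993 then 7 else (if n < 996 then 0 else 4))))) else (if n < 1032 then (if n < 1008 then (if n < 1002 then (if n < 1001 then 0 else 6) else (if n < 1005 then 4 else 3)) else (if n < 1027 then (if n < 1017 then 7 else 5) else (if n < 1028 then 4 else (if n < 1029 then 2 else 6)))) else (if n < 1055 then (if n < 1044 then (if n < 1035 then 7 else 1) else (if n < 1054 then 3 else 6)) else (if n < 1059 then (if n < 1056 then 3 else 7) else (if n < 1062 then 0 else (if n < 1071 then 4 else 1))))))) else (if n < 1298 then (if n < 1230 then (if n < 1161 then (if n < 1137 then (if n < 1135 then (if n < 1107 then 2 else 5) else (if n < 1136 then 7 else 4)) else (if n < 1143 then (if n < 1140 then 3 else 2) else (if n < 1152 then 5 else 6))) else (if n < 1222 then (if n < 1219 then (if n < 1188 then 1 else 0) else (if n < 1220 then 3 else 7)) else (if n < 1225 then (if n < 1223 then 0 else 2) else (if n < 1226 then 4 else (if n < 1227 then 3 else 0))))) else (if n < 1251 then (if n < 1239 then (if n < 1235 then (if n < 1234 then 5 else 7) else (if n < 1236 then 6 else 2)) else (if n < 1244 then (if n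 < 1243 then 1 else 1) else (if n < 1245 then 4 else (if n < 1248 then 5 else 7)))) else (if n < 1272 then (if n < 1270 then (if n < 1260 then 6 else 0) else (if n < 1271 then 6 else 5)) else (if n < 1278 then (if n < 1275 then 1 else 3) else (if n < 1287 then 2 else (if n < 1297 then 4 else 2)))))) else (if n < 1474 then (if n < 1379 then (if n < 1314 then (if n < 1302 then (if n < 1299 then 1 else 6) else (if n < 1305 then 4 else 7)) else (if n < 1350 then (if n < 1323 then 5 else 3) else (if n < 1378 then 0 else 5))) else (if n < 1395 then (if n < 1383 then (if n < 1380 then 0 else 4) else (if n < 1386 then 6 else 1)) else (if n < 1431 then (if n < 1404 then 3 else 2) else (if n < 1471 then 7 else (if n < 1472 then 7 else 0))))) else (if n < 1493 then (if n < 1483 then (if n < 1480 then (if n < 1475 then 0 else 1) else (if n < 1481 then 2 else 3)) else (if n < 1489 then (if n < 1484 then 5 else 2) else (if n < 1490 then 5 else (if n < 1492 then 7 else 1)))) else (if n < 1500 then (if n < 1496 then (if n < 1495 then 6 else 4) else (if n < 1497 then 3 else 2)) else (if n < 1505 then (if n < 1504 then 5 else 6) else (if n < 1506 then 0 else (if n < 1509 then 4 else 7)))))))) else (if n < 1722 then (if n < 1611 then (if n < 1550 then (if n < 1531 then (if n < 1522 then (if n < 1519 then (if n < 1517 then 3 else 1) else (if n < 1520 then 4 else 5)) else (if n < 1524 then (if n < 1523 then 2 else 4) else (if n < 1527 then 6 else 3))) else (if n < 1543 then (if n < 1533 then (if n < 1532 then 7 else 6) else (if n < 1536 then 0 else 1))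 else (if n < 1546 then (if n < 1544 then 1 else 2) else (if n < 1547 then 7 else (if n < 1549 then 4 else 3))))) else (if n < 1569 then (if n < 1559 then (if n < 1554 then (if n < 1551 then 7 else 4) else (if n < 1558 then 6 else 4)) else (if n < 1563 then (if n < 1560 then 1 else 5) else (if n < 1567 then 0 else (if n < 1568 then 0 else 5)))) else (if n < 1594 then (if n < 1575 then (if n < 1572 then 6 else 3) else (if n < 1584 then 1 else 2)) else (if n < 1596 then (if n < 1595 then 6 else 0) else (if n < 1599 then 7 else (if n < 1602 then 2 else 5)))))) else (if n < 1656 then (if n < 1635 then (if n < 1628 then (if n < 1625 then (if n < 1624 then 3 else 0) else (if n < 1627 then 5 else 6)) else (if n < 1631 then (if n < 1630 then 3 else 5) else (if n < 1632 then 6 else 1))) else (if n < 1644 then (if n < 1640 then (if n < 1639 then 2 else 3) else (if n < 1641 then 7 else 6)) else (if n < 1649 then (if n < 1648 then 4 else 2) else (if n < 1650 then 4 else (if n < 1653 then 3 else 0))))) else (if n < 1706 then (if n < 1677 then (if n < 1675 then (if n < 1665 then 7 else 1) else (if n < 1676 then 1 else 2)) else (if n < 1683 then (if n < 1680 then 4 else 7) else (if n < 1692 then 0 else (if n < 1705 then 5 else 6)))) else (if n < 1712 then (if n < 1709 then (if n < 1708 then 4 else 3) else (if n < 1711 then 7 else 1)) else (if n < 1716 then (if n < 1713 then 2 else 5) else (if n < 1720 then 4 else (if n < 1721 then 0 else 5))))))) else (if n < 1955 then (if n < 1788 then (if n < 1756 then (if n < 1731 then (if n < 1729 then (if n < 1725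 then 1 else 6) else (if n < 1730 then 7 else 1)) else (if n < 1737 then (if n < 1734 then 0 else 2) else (if n < 1746 then 6 else 3))) else (if n < 1764 then (if n < 1758 then (if n < 1757 then 5 else 3) else (if n < 1761 then 2 else 0)) else (if n < 1783 then (if n < 1773 then 7 else 4) else (if n < 1784 then 2 else (if n < 1785 then 6 else 3))))) else (if n < 1872 then (if n < 1836 then (if n < 1800 then (if n < 1791 then 5 else 0) else (if n < 1809 then 7 else 4)) else (if n < 1865 then (if n < 1864 then 1 else 4) else (if n < 1866 then 0 else (if n < 1869 then 7 else 1)))) else (if n < 1948 then (if n < 1890 then (if n < 1881 then 3 else 2) else (if n < 1917 then 5 else 6)) else (if n < 1951 then (if n < 1949 then 4 else 6) else (if n < 1952 then 2 else (if n < 1954 then 0 else 6)))))) else (if n < 2007 then (if n < 1973 then (if n < 1964 then (if n < 1959 then (if n < 1956 then 5 else 3) else (if n < 1963 then 7 else 1)) else (if n < 1968 then (if n < 1965 then 4 else 7) else (if n < 1972 then 3 else 3))) else (if n < 1989 then (if n < 1977 then (if n < 1974 then 2 else 1) else (if n < 1980 then 4 else 0)) else (if n < 2000 then (if n < 1999 then 5 else 0) else (if n < 2001 then 7 else (if n < 2004 then 5 else 6))))) else (if n < 2079 then (if n < 2028 then (if n < 2026 then (if n < 2016 then 1 else 2) else (if n < 2027 then 5 else 3)) else (if n < 2034 then (if n < 2031 then 0 else 1) else (if n < 2043 then 2 else (if n < 2052 then 6 else 7)))) else (if n < 2112 then (if n < 2108 then (if n < 2107 then 4 else 7) else (if n <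 2109 then 1 else 2)) else (if n < 2124 then (if n < 2115 then 5 else 4) else (if n < 2133 then 0 else (if n < 2160 then 6 else 3))))))))))"

lemma tab_num: "tab (numeral k) = (if (numeral k::nat) < 829 then (if (numeral k::nat) < 415 then (if (numeral k::nat) < 223 then (if (numeral k::nat) < 132 then (if (numeral k::nat) < 95 then (if (numeral k::nat) < 67 then (if (numeral k::nat) < 49 then (if (numeral k::nat) < 43 then (if (numeral k::nat) < 41 then 0 else 6) else (if (numeral k::nat) < 44 then 3 else 7)) else (if (numeral k::nat) < 52 then (if (numeral k::nat) < 50 then 1 else 5) else (if (numeral k::nat) < 53 then 0 else 4))) else (if (numeral k::nat) < 76 then (if (numeral k::nat) < 70 then (if (numeral k::nat) < 68 then 1 else 5) else (if (numeral k::nat) < 71 then 6 else 2)) else (if (numeral k::nat) < 79 then (if (numeral k::nat) < 77 then 4 else 2) else (if (numeral k::nat) < 80 then 3 else (if (numeral k::nat) < 94 then 7 else 2))))) else (if (numeral k::nat) < 115 then (if (numeral k::nat) < 104 then (if (numeral k::nat) < 98 then (if (numeral k::nat) < 97 then 3 else 5) else (if (numeral k::nat) < 103 then 0 else 6)) else (if (numeral k::nat) < 107 then (if (numeral k::nat) < 106 then 7 else 1) else (if (numeral k::nat) < 112 then 6 else (if (numeral k::nat) < 113 then 3 else 4)))) else (if (numeral k::nat) < 120 then (if (numeral k::nat) < 118 then (if (numeral k::nat) < 116 then 2 else 1) else (if (numeral k::nat) < 119 then 6 else 2)) else (if (numeral k::nat) < 127 then (if (numeral k::nat) < 123 then 7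 else 4) else (if (numeral k::nat) < 128 then 7 else (if (numeral k::nat) < 129 then 3 else 0)))))) else (if (numeral k::nat) < 184 then (if (numeral k::nat) < 150 then (if (numeral k::nat) < 143 then (if (numeral k::nat) < 140 then (if (numeral k::nat) < 139 then 5 else 5) else (if (numeral k::nat) < 142 then 6 else 0)) else (if (numeral k::nat) < 146 then (if (numeral k::nat) < 145 then 3 else 4) else (if (numeral k::nat) < 147 then 1 else 0))) else (if (numeral k::nat) < 159 then (if (numeral k::nat) < 155 then (if (numeral k::nat) < 154 then 7 else 2) else (if (numeral k::nat) < 156 then 5 else 1)) else (if (numeral k::nat) < 176 then (if (numeral k::nat) < 175 then 4 else 3) else (if (numeral k::nat) < 178 then 4 else (if (numeral k::nat) < 179 then 4 else 5))))) else (if (numeral k::nat) < 200 then (if (numeral k::nat) < 193 then (if (numeral k::nat) < 187 then (if (numeral k::nat) < 185 then 7 else 0) else (if (numeral k::nat) < 188 then 2 else 1)) else (if (numeral k::nat) < 196 then (if (numeral k::nat) < 194 then 4 else 1) else (if (numeral k::nat) < 197 then 7 else (if (numeral k::nat) < 199 then 2 else 1)))) else (if (numeral k::nat) < 209 then (if (numeral k::nat) < 204 then (if (numeral k::nat) < 201 then 0 else 5) else (if (numeral k::nat) < 208 then 6 else 5)) else (if (numeral k::nat) < 213 then (if (numeral k::nat) < 210 then 6 else 2) else (if (numeral k::nat) < 220 then 3 else (if (numeral k::nat) < 221 then 6 else 7))))))) else (if (numeral k::nat) < 308 then (if (numeral k::nat) < 269 then (if (numeral k::nat) < 237 then (if (numeral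 k::nat) < 228 then (if (numeral k::nat) < 226 then (if (numeral k::nat) < 224 then 5 else 0) else (if (numeral k::nat) < 227 then 7 else 3)) else (if (numeral k::nat) < 235 then (if (numeral k::nat) < 231 then 2 else 1) else (if (numeral k::nat) < 236 then 0 else 4))) else (if (numeral k::nat) < 259 then (if (numeral k::nat) < 256 then (if (numeral k::nat) < 240 then 3 else 6) else (if (numeral k::nat) < 257 then 4 else 7)) else (if (numeral k::nat) < 265 then (if (numeral k::nat) < 260 then 2 else 3) else (if (numeral k::nat) < 266 then 3 else (if (numeral k::nat) < 268 then 6 else 7))))) else (if (numeral k::nat) < 289 then (if (numeral k::nat) < 278 then (if (numeral k::nat) < 275 then (if (numeral k::nat) < 274 then 0 else 2) else (if (numeral k::nat) < 277 then 3 else 6)) else (if (numeral k::nat) < 281 then (if (numeral k::nat) < 280 then 5 else 5) else (if (numeral k::nat) < 282 then 4 else (if (numeral k::nat) < 285 then 1 else 0)))) else (if (numeral k::nat) < 301 then (if (numeral k::nat) < 291 then (if (numeral k::nat) < 290 then 4 else 2) else (if (numeral k::nat) < 294 then 7 else 1)) else (if (numeral k::nat) < 304 then (if (numeral k::nat) < 302 then 7 else 0) else (if (numeral k::nat) < 305 then 1 else (if (numeral k::nat) < 307 then 4 else 0)))))) else (if (numeral k::nat) < 345 then (if (numeral k::nat) < 329 then (if (numeral k::nat) < 317 then (if (numeral k::nat) < 312 then (if (numeral k::nat) < 309 then 6 else 3) else (if (numeral k::nat) < 316 then 5 else 6)) else (if (numeral k::nat) < 321 then (if (numeral k::nat) <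 318 then 1 else 5) else (if (numeral k::nat) < 328 then 2 else 0))) else (if (numeral k::nat) < 335 then (if (numeral k::nat) < 332 then (if (numeral k::nat) < 331 then 1 else 4) else (if (numeral k::nat) < 334 then 2 else 7)) else (if (numeral k::nat) < 339 then (if (numeral k::nat) < 336 then 5 else 6) else (if (numeral k::nat) < 343 then 1 else (if (numeral k::nat) < 344 then 5 else 4))))) else (if (numeral k::nat) < 380 then (if (numeral k::nat) < 354 then (if (numeral k::nat) < 352 then (if (numeral k::nat) < 348 then 2 else 3) else (if (numeral k::nat) < 353 then 1 else 0)) else (if (numeral k::nat) < 360 then (if (numeral k::nat) < 357 then 5 else 7) else (if (numeral k::nat) < 369 then 3 else (if (numeral k::nat) < 379 then 6 else 3)))) else (if (numeral k::nat) < 396 then (if (numeral k::nat) < 384 then (if (numeral k::nat) < 381 then 7 else 4) else (if (numeral k::nat) < 387 then 6 else 2)) else (if (numeral k::nat) < 410 then (if (numeral k::nat) < 409 then 0 else 5) else (if (numeral k::nat) < 412 then 2 else (if (numeral k::nat) < 413 then 0 else 6)))))))) else (if (numeral k::nat) < 622 then (if (numeral k::nat) < 528 then (if (numeral k::nat) < 465 then (if (numeral k::nat) < 433 then (if (numeral k::nat) < 424 then (if (numeral k::nat) < 417 then (if (numeral k::nat) < 416 then 6 else 1) else (if (numeral k::nat) < 420 then 0 else 7)) else (if (numeral k::nat) < 426 then (if (numeral k::nat) < 425 then 1 else 3) else (if (numeral k::nat) < 429 then 4 else 5))) else (if (numeral k::nat) < 441 then (if (numeral k::nat) < 435 then (if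 (numeral k::nat) < 434 then 3 else 7) else (if (numeral k::nat) < 438 then 6 else 4)) else (if (numeral k::nat) < 460 then (if (numeral k::nat) < 450 then 2 else 0) else (if (numeral k::nat) < 461 then 2 else (if (numeral k::nat) < 462 then 5 else 1))))) else (if (numeral k::nat) < 511 then (if (numeral k::nat) < 500 then (if (numeral k::nat) < 477 then (if (numeral k::nat) < 468 then 3 else 4) else (if (numeral k::nat) < 499 then 7 else 5)) else (if (numeral k::nat) < 503 then (if (numeral k::nat) < 502 then 2 else 1) else (if (numeral k::nat) < 508 then 6 else (if (numeral k::nat) < 509 then 0 else 1)))) else (if (numeral k::nat) < 520 then (if (numeral k::nat) < 517 then (if (numeral k::nat) < 512 then 4 else 5) else (if (numeral k::nat) < 518 then 6 else 0)) else (if (numeral k::nat) < 523 then (if (numeral k::nat) < 521 then 5 else 3) else (if (numeral k::nat) < 524 then 7 else (if (numeral k::nat) < 525 then 1 else 4)))))) else (if (numeral k::nat) < 571 then (if (numeral k::nat) < 548 then (if (numeral k::nat) < 537 then (if (numeral k::nat) < 533 then (if (numeral k::nat) < 532 then 2 else 2) else (if (numeral k::nat) < 534 then 7 else 3)) else (if (numeral k::nat) < 545 then (if (numeral k::nat) < 544 then 6 else 2) else (if (numeral k::nat) < 547 then 4 else 7))) else (if (numeral k::nat) < 555 then (if (numeral k::nat) < 551 then (if (numeral k::nat) < 550 then 1 else 3) else (if (numeral k::nat) < 552 then 0 else 7)) else (if (numeral k::nat) < 560 then (if (numeral k::nat) < 559 then 4 else 5) else (if (numeral k::nat) < 561 then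 3 else (if (numeral k::nat) < 564 then 6 else 0))))) else (if (numeral k::nat) < 587 then (if (numeral k::nat) < 577 then (if (numeral k::nat) < 574 then (if (numeral k::nat) < 572 then 7 else 5) else (if (numeral k::nat) < 575 then 6 else 7)) else (if (numeral k::nat) < 579 then (if (numeral k::nat) < 578 then 0 else 4) else (if (numeral k::nat) < 582 then 1 else (if (numeral k::nat) < 586 then 3 else 3)))) else (if (numeral k::nat) < 596 then (if (numeral k::nat) < 591 then (if (numeral k::nat) < 588 then 0 else 4) else (if (numeral k::nat) < 595 then 2 else 4)) else (if (numeral k::nat) < 600 then (if (numeral k::nat) < 597 then 6 else 2) else (if (numeral k::nat) < 603 then 0 else (if (numeral k::nat) < 612 then 5 else 1))))))) else (if (numeral k::nat) < 752 then (if (numeral k::nat) < 672 then (if (numeral k::nat) < 655 then (if (numeral k::nat) < 630 then (if (numeral k::nat) < 624 then (if (numeral k::nat) < 623 then 1 else 2) else (if (numeral k::nat) < 627 then 3 else 5)) else (if (numeral k::nat) < 652 then (if (numeral k::nat) < 639 then 6 else 7) else (if (numeral k::nat) < 653 then 1 else 3))) else (if (numeral k::nat) < 660 then (if (numeral k::nat) < 658 then (if (numeral k::nat) < 656 then 3 else 4) else (if (numeral k::nat) < 659 then 2 else 7)) else (if (numeral k::nat) < 667 then (if (numeral k::nat) < 663 then 6 else 0) else (if (numeral k::nat) < 668 then 6 else (if (numeral k::nat) < 669 then 2 else 5))))) else (if (numeral k::nat) < 705 then (if (numeral k::nat) < 681 then (if (numeral k::nat) < 677 then (if (numeral k::nat)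 < 676 then 7 else 0) else (if (numeral k::nat) < 678 then 5 else 7)) else (if (numeral k::nat) < 693 then (if (numeral k::nat) < 684 then 1 else 3) else (if (numeral k::nat) < 703 then 4 else (if (numeral k::nat) < 704 then 4 else 6)))) else (if (numeral k::nat) < 742 then (if (numeral k::nat) < 711 then (if (numeral k::nat) < 708 then 0 else 2) else (if (numeral k::nat) < 720 then 5 else 1)) else (if (numeral k::nat) < 745 then (if (numeral k::nat) < 743 then 6 else 1) else (if (numeral k::nat) < 746 then 7 else (if (numeral k::nat) < 751 then 4 else 5)))))) else (if (numeral k::nat) < 790 then (if (numeral k::nat) < 767 then (if (numeral k::nat) < 761 then (if (numeral k::nat) < 755 then (if (numeral k::nat) < 754 then 4 else 6) else (if (numeral k::nat) < 760 then 3 else 7)) else (if (numeral k::nat) < 764 then (if (numeral k::nat) < 763 then 2 else 4) else (if (numeral k::nat) < 766 then 0 else 2))) else (if (numeral k::nat) < 776 then (if (numeral k::nat) < 771 then (if (numeral k::nat) < 768 then 5 else 3) else (if (numeral k::nat) < 775 then 1 else 3)) else (if (numeral k::nat) < 780 then (if (numeral k::nat) < 777 then 1 else 6) else (if (numeral k::nat) < 787 then 2 else (if (numeral k::nat) < 788 then 0 else 3))))) else (if (numeral k::nat) < 807 then (if (numeral k::nat) < 795 then (if (numeral k::nat) < 793 then (if (numeral k::nat) < 791 then 2 else 6) else (if (numeral k::nat) < 794 then 5 else 7)) else (if (numeral k::nat) < 802 then (if (numeral k::nat) < 798 then 4 else 0) else (if (numeral k::nat) < 803 then 1 else (if (numeral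 k::nat) < 804 then 0 else 7)))) else (if (numeral k::nat) < 818 then (if (numeral k::nat) < 815 then (if (numeral k::nat) < 814 then 5 else 4) else (if (numeral k::nat) < 817 then 0 else 3)) else (if (numeral k::nat) < 821 then (if (numeral k::nat) < 820 then 5 else 1) else (if (numeral k::nat) < 822 then 6 else (if (numeral k::nat) < 825 then 5 else 2))))))))) else (if (numeral k::nat) < 1516 then (if (numeral k::nat) < 1080 then (if (numeral k::nat) < 947 then (if (numeral k::nat) < 896 then (if (numeral k::nat) < 846 then (if (numeral k::nat) < 838 then (if (numeral k::nat) < 831 then (if (numeral k::nat) < 830 then 0 else 2) else (if (numeral k::nat) < 834 then 3 else 7)) else (if (numeral k::nat) < 840 then (if (numeral k::nat) < 839 then 5 else 7) else (if (numeral k::nat) < 843 then 1 else 6))) else (if (numeral k::nat) < 867 then (if (numeral k::nat) < 865 then (if (numeral k::nat) < 855 then 0 else 4) else (if (numeral k::nat) < 866 then 7 else 4)) else (if (numeral k::nat) < 873 then (if (numeral k::nat) < 870 then 2 else 1) else (if (numeral k::nat) < 882 then 3 else (if (numeral k::nat) < 895 then 6 else 2))))) else (if (numeral k::nat) < 912 then (if (numeral k::nat) < 902 then (if (numeral k::nat) < 899 then (if (numeral k::nat) < 898 then 6 else 1) else (if (numeral k::nat) < 901 then 7 else 0)) else (if (numeral k::nat) < 906 then (if (numeral k::nat) < 903 then 2 else 7) else (if (numeral k::nat) < 910 then 3 else (if (numeral k::nat) < 911 then 4 else 5)))) else (if (numeral k::nat) < 921 then (if (numeral k::nat) < 919 then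 (if (numeral k::nat) < 915 then 1 else 0) else (if (numeral k::nat) < 920 then 6 else 3)) else (if (numeral k::nat) < 927 then (if (numeral k::nat) < 924 then 0 else 5) else (if (numeral k::nat) < 936 then 4 else (if (numeral k::nat) < 946 then 7 else 3)))))) else (if (numeral k::nat) < 1000 then (if (numeral k::nat) < 980 then (if (numeral k::nat) < 963 then (if (numeral k::nat) < 951 then (if (numeral k::nat) < 948 then 1 else 5) else (if (numeral k::nat) < 954 then 4 else 6)) else (if (numeral k::nat) < 977 then (if (numeral k::nat) < 976 then 2 else 1) else (if (numeral k::nat) < 979 then 5 else 5))) else (if (numeral k::nat) < 987 then (if (numeral k::nat) < 983 then (if (numeral k::nat) < 982 then 1 else 3) else (if (numeral k::nat) < 984 then 0 else 2)) else (if (numeral k::nat) < 992 then (if (numeral k::nat) < 991 then 6 else 2) else (if (numeral k::nat) < 993 then 7 else (if (numeral k::nat) < 996 then 0 else 4))))) else (if (numeral k::nat) < 1032 then (if (numeral k::nat) < 1008 then (if (numeral k::nat) < 1002 then (if (numeral k::nat) < 1001 then 0 else 6) else (if (numeral k::nat) < 1005 then 4 else 3)) else (if (numeral k::nat) < 1027 then (if (numeral k::nat) < 1017 then 7 else 5) else (if (numeral k::nat) < 1028 then 4 else (if (numeral k::nat) < 1029 then 2 else 6)))) else (if (numeral k::nat) < 1055 then (if (numeral k::nat) < 1044 then (if (numeral k::nat) < 1035 then 7 else 1) else (if (numeral k::nat) < 1054 then 3 else 6)) else (if (numeral k::nat) < 1059 then (if (numeral k::nat) < 1056 then 3 else 7)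 else (if (numeral k::nat) < 1062 then 0 else (if (numeral k::nat) < 1071 then 4 else 1))))))) else (if (numeral k::nat) < 1298 then (if (numeral k::nat) < 1230 then (if (numeral k::nat) < 1161 then (if (numeral k::nat) < 1137 then (if (numeral k::nat) < 1135 then (if (numeral k::nat) < 1107 then 2 else 5) else (if (numeral k::nat) < 1136 then 7 else 4)) else (if (numeral k::nat) < 1143 then (if (numeral k::nat) < 1140 then 3 else 2) else (if (numeral k::nat) < 1152 then 5 else 6))) else (if (numeral k::nat) < 1222 then (if (numeral k::nat) < 1219 then (if (numeral k::nat) < 1188 then 1 else 0) else (if (numeral k::nat) < 1220 then 3 else 7)) else (if (numeral k::nat) < 1225 then (if (numeral k::nat) < 1223 then 0 else 2) else (if (numeral k::nat) < 1226 then 4 else (if (numeral k::nat) < 1227 then 3 else 0))))) else (if (numeral k::nat) < 1251 then (if (numeral k::nat) < 1239 then (if (numeral k::nat) < 1235 then (if (numeral k::nat) < 1234 then 5 else 7) else (if (numeral k::nat) < 1236 then 6 else 2)) else (if (numeral k::nat) < 1244 then (if (numeral k::nat) < 1243 then 1 else 1) else (if (numeral k::nat) < 1245 then 4 else (if (numeral k::nat) < 1248 then 5 else 7)))) else (if (numeral k::nat) < 1272 then (if (numeral k::nat) < 1270 then (if (numeral k::nat) < 1260 then 6 else 0) else (if (numeral k::nat) < 1271 then 6 else 5)) else (if (numeral k::nat) < 1278 then (if (numeral k::nat) < 1275 then 1 else 3) else (if (numeral k::nat) < 1287 then 2 else (if (numeral k::nat) < 1297 then 4 else 2)))))) else (if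 (numeral k::nat) < 1474 then (if (numeral k::nat) < 1379 then (if (numeral k::nat) < 1314 then (if (numeral k::nat) < 1302 then (if (numeral k::nat) < 1299 then 1 else 6) else (if (numeral k::nat) < 1305 then 4 else 7)) else (if (numeral k::nat) < 1350 then (if (numeral k::nat) < 1323 then 5 else 3) else (if (numeral k::nat) < 1378 then 0 else 5))) else (if (numeral k::nat) < 1395 then (if (numeral k::nat) < 1383 then (if (numeral k::nat) < 1380 then 0 else 4) else (if (numeral k::nat) < 1386 then 6 else 1)) else (if (numeral k::nat) < 1431 then (if (numeral k::nat) < 1404 then 3 else 2) else (if (numeral k::nat) < 1471 then 7 else (if (numeral k::nat) < 1472 then 7 else 0))))) else (if (numeral k::nat) < 1493 then (if (numeral k::nat) < 1483 then (if (numeral k::nat) < 1480 then (if (numeral k::nat) < 1475 then 0 else 1) else (if (numeral k::nat) < 1481 then 2 else 3)) else (if (numeral k::nat) < 1489 then (if (numeral k::nat) < 1484 then 5 else 2) else (if (numeral k::nat) < 1490 then 5 else (if (numeral k::nat) < 1492 then 7 else 1)))) else (if (numeral k::nat) < 1500 then (if (numeral k::nat) < 1496 then (if (numeral k::nat) < 1495 then 6 else 4) else (if (numeral k::nat) < 1497 then 3 else 2)) else (if (numeral k::nat) < 1505 then (if (numeral k::nat) < 1504 then 5 else 6) else (if (numeral k::nat) < 1506 then 0 else (if (numeral k::nat) < 1509 then 4 else 7)))))))) else (if (numeral k::nat) < 1722 then (if (numeral k::nat) < 1611 then (if (numeral k::nat) < 1550 then (if (numeral k::nat) < 1531 then (if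 (numeral k::nat) < 1522 then (if (numeral k::nat) < 1519 then (if (numeral k::nat) < 1517 then 3 else 1) else (if (numeral k::nat) < 1520 then 4 else 5)) else (if (numeral k::nat) < 1524 then (if (numeral k::nat) < 1523 then 2 else 4) else (if (numeral k::nat) < 1527 then 6 else 3))) else (if (numeral k::nat) < 1543 then (if (numeral k::nat) < 1533 then (if (numeral k::nat) < 1532 then 7 else 6) else (if (numeral k::nat) < 1536 then 0 else 1)) else (if (numeral k::nat) < 1546 then (if (numeral k::nat) < 1544 then 1 else 2) else (if (numeral k::nat) < 1547 then 7 else (if (numeral k::nat) < 1549 then 4 else 3))))) else (if (numeral k::nat) < 1569 then (if (numeral k::nat) < 1559 then (if (numeral k::nat) < 1554 then (if (numeral k::nat) < 1551 then 7 else 4) else (if (numeral k::nat) < 1558 then 6 else 4)) else (if (numeral k::nat) < 1563 then (if (numeral k::nat) < 1560 then 1 else 5) else (if (numeral k::nat) < 1567 then 0 else (if (numeral k::nat) < 1568 then 0 else 5)))) else (if (numeral k::nat) < 1594 then (if (numeral k::nat) < 1575 then (if (numeral k::nat) < 1572 then 6 else 3) else (if (numeral k::nat) < 1584 then 1 else 2)) else (if (numeral k::nat) < 1596 then (if (numeral k::nat) < 1595 then 6 else 0) else (if (numeral k::nat) < 1599 then 7 else (if (numeral k::nat) < 1602 then 2 else 5)))))) else (if (numeral k::nat) < 1656 then (if (numeral k::nat) < 1635 then (if (numeral k::nat) < 1628 then (if (numeral k::nat) < 1625 then (if (numeral k::nat) < 1624 then 3 else 0) else (if (numeral k::nat) <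 1627 then 5 else 6)) else (if (numeral k::nat) < 1631 then (if (numeral k::nat) < 1630 then 3 else 5) else (if (numeral k::nat) < 1632 then 6 else 1))) else (if (numeral k::nat) < 1644 then (if (numeral k::nat) < 1640 then (if (numeral k::nat) < 1639 then 2 else 3) else (if (numeral k::nat) < 1641 then 7 else 6)) else (if (numeral k::nat) < 1649 then (if (numeral k::nat) < 1648 then 4 else 2) else (if (numeral k::nat) < 1650 then 4 else (if (numeral k::nat) < 1653 then 3 else 0))))) else (if (numeral k::nat) < 1706 then (if (numeral k::nat) < 1677 then (if (numeral k::nat) < 1675 then (if (numeral k::nat) < 1665 then 7 else 1) else (if (numeral k::nat) < 1676 then 1 else 2)) else (if (numeral k::nat) < 1683 then (if (numeral k::nat) < 1680 then 4 else 7) else (if (numeral k::nat) < 1692 then 0 else (if (numeral k::nat) < 1705 then 5 else 6)))) else (if (numeral k::nat) < 1712 then (if (numeral k::nat) < 1709 then (if (numeral k::nat) < 1708 then 4 else 3) else (if (numeral k::nat) < 1711 then 7 else 1)) else (if (numeral k::nat) < 1716 then (if (numeral k::nat) < 1713 then 2 else 5) else (if (numeral k::nat) < 1720 then 4 else (if (numeral k::nat) < 1721 then 0 else 5))))))) else (if (numeral k::nat) < 1955 then (if (numeral k::nat) < 1788 then (if (numeral k::nat) < 1756 then (if (numeral k::nat) < 1731 then (if (numeral k::nat) < 1729 then (if (numeral k::nat) < 1725 then 1 else 6) else (if (numeral k::nat) < 1730 then 7 else 1)) else (if (numeral k::nat) < 1737 then (if (numeral k::nat) < 1734 then 0 else 2)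 else (if (numeral k::nat) < 1746 then 6 else 3))) else (if (numeral k::nat) < 1764 then (if (numeral k::nat) < 1758 then (if (numeral k::nat) < 1757 then 5 else 3) else (if (numeral k::nat) < 1761 then 2 else 0)) else (if (numeral k::nat) < 1783 then (if (numeral k::nat) < 1773 then 7 else 4) else (if (numeral k::nat) < 1784 then 2 else (if (numeral k::nat) < 1785 then 6 else 3))))) else (if (numeral k::nat) < 1872 then (if (numeral k::nat) < 1836 then (if (numeral k::nat) < 1800 then (if (numeral k::nat) < 1791 then 5 else 0) else (if (numeral k::nat) < 1809 then 7 else 4)) else (if (numeral k::nat) < 1865 then (if (numeral k::nat) < 1864 then 1 else 4) else (if (numeral k::nat) < 1866 then 0 else (if (numeral k::nat) < 1869 then 7 else 1)))) else (if (numeral k::nat) < 1948 then (if (numeral k::nat) < 1890 then (if (numeral k::nat) < 1881 then 3 else 2) else (if (numeral k::nat) < 1917 then 5 else 6)) else (if (numeral k::nat) < 1951 then (if (numeral k::nat) < 1949 then 4 else 6) else (if (numeral k::nat) < 1952 then 2 else (if (numeral k::nat) < 1954 then 0 else 6)))))) else (if (numeral k::nat) < 2007 then (if (numeral k::nat) < 1973 then (if (numeral k::nat) < 1964 then (if (numeral k::nat) < 1959 then (if (numeral k::nat) < 1956 then 5 else 3) else (if (numeral k::nat) < 1963 then 7 else 1)) else (if (numeral k::nat) < 1968 then (if (numeral k::nat) < 1965 then 4 else 7) else (if (numeral k::nat) < 1972 then 3 else 3))) else (if (numeral k::nat) < 1989 then (if (numeral k::nat) < 1977 then (if (numeral k::nat)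 < 1974 then 2 else 1) else (if (numeral k::nat) < 1980 then 4 else 0)) else (if (numeral k::nat) < 2000 then (if (numeral k::nat) < 1999 then 5 else 0) else (if (numeral k::nat) < 2001 then 7 else (if (numeral k::nat) < 2004 then 5 else 6))))) else (if (numeral k::nat) < 2079 then (if (numeral k::nat) < 2028 then (if (numeral k::nat) < 2026 then (if (numeral k::nat) < 2016 then 1 else 2) else (if (numeral k::nat) < 2027 then 5 else 3)) else (if (numeral k::nat) < 2034 then (if (numeral k::nat) < 2031 then 0 else 1) else (if (numeral k::nat) < 2043 then 2 else (if (numeral k::nat) < 2052 then 6 else 7)))) else (if (numeral k::nat) < 2112 then (if (numeral k::nat) < 2108 then (if (numeral k::nat) < 2107 then 4 else 7) else (if (numeral k::nat) < 2109 then 1 else 2)) else (if (numeral k::nat) < 2124 then (if (numeral k::nat) < 2115 then 5 else 4) else (if (numeral k::nat) < 2133 then 0 else (if (numeral k::nat) < 2160 then 6 else 3))))))))))"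
  unfolding tab_def ..

definition lk :: "(nat \<Rightarrow> nat) \<Rightarrow> nat" where
 "lk v = tab (v 0 + 3 * v 1 + 9 * v 2 + 27 * v 3 + 81 * v 4 + 243 * v 5 + 729 * v 6) mod 8"
definition mk :: "nat \<Rightarrow> nat \<Rightarrow> nat \<Rightarrow> nat \<Rightarrow> nat \<Rightarrow> nat \<Rightarrow> nat \<Rightarrow> nat" where
 "mk x1 e1 x2 e2 x3 e3 = (\<lambda>x. if x = x1 then Suc e1 else if x = x2 then Suc e2 else if x = x3 then Suc e3 else 0)"
definition lkp :: "(nat \<Rightarrow> nat) \<Rightarrow> nat \<times> nat \<Rightarrow> nat" where "lkp v p = lk (v(fst p := Suc (snd p)))"
definition exts :: "(nat \<Rightarrow> nat) \<Rightarrow> (nat \<times> nat) list" where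
 "exts v = [(y,e). y \<leftarrow> [0..<7], v y = 0, e \<leftarrow> [0,1]]"
definition vals :: "(nat \<Rightarrow> nat) \<Rightarrow> nat list" where
 "vals v = map (lkp v) (exts v)"
definition good :: "(nat \<Rightarrow> nat) \<Rightarrow> bool" where
 "good v = (distinct (vals v) \<and> length (vals v) = 8)"

lemma gi:
  "good (mk 0 0 1 0 2 0)"
  "good (mk 0 0 1 0 2 1)"
  "good (mk 0 0 1 1 2 0)"
  "good (mk 0 0 1 1 2 1)"
  "good (mk 0 1 1 0 2 0)"
  "good (mk 0 1 1 0 2 1)"
  "good (mk 0 1 1 1 2 0)"
  "good (mk 0 1 1 1 2 1)"
  "good (mk 0 0 1 0 3 0)"
  "good (mk 0 0 1 0 3 1)"
  "good (mk 0 0 1 1 3 0)"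
  "good (mk 0 0 1 1 3 1)"
  "good (mk 0 1 1 0 3 0)"
  "good (mk 0 1 1 0 3 1)"
  "good (mk 0 1 1 1 3 0)"
  "good (mk 0 1 1 1 3 1)"
  "good (mk 0 0 1 0 4 0)"
  "good (mk 0 0 1 0 4 1)"
  "good (mk 0 0 1 1 4 0)"
  "good (mk 0 0 1 1 4 1)"
  "good (mk 0 1 1 0 4 0)"
  "good (mk 0 1 1 0 4 1)"
  "good (mk 0 1 1 1 4 0)"
  "good (mk 0 1 1 1 4 1)"
  "good (mk 0 0 1 0 5 0)"
  "good (mk 0 0 1 0 5 1)"
  "good (mk 0 0 1 1 5 0)"
  "good (mk 0 0 1 1 5 1)"
  "good (mk 0 1 1 0 5 0)"
  "good (mk 0 1 1 0 5 1)"
  "good (mk 0 1 1 1 5 0)"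
  "good (mk 0 1 1 1 5 1)"
  "good (mk 0 0 1 0 6 0)"
  "good (mk 0 0 1 0 6 1)"
  "good (mk 0 0 1 1 6 0)"
  "good (mk 0 0 1 1 6 1)"
  "good (mk 0 1 1 0 6 0)"
  "good (mk 0 1 1 0 6 1)"
  "good (mk 0 1 1 1 6 0)"
  "good (mk 0 1 1 1 6 1)"
  "good (mk 0 0 2 0 3 0)"
  "good (mk 0 0 2 0 3 1)"
  "good (mk 0 0 2 1 3 0)"
  "good (mk 0 0 2 1 3 1)"
  "good (mk 0 1 2 0 3 0)"
  "good (mk 0 1 2 0 3 1)"
  "good (mk 0 1 2 1 3 0)"
  "good (mk 0 1 2 1 3 1)"
  "good (mk 0 0 2 0 4 0)"
  "good (mk 0 0 2 0 4 1)"
  "good (mk 0 0 2 1 4 0)"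
  "good (mk 0 0 2 1 4 1)"
  "good (mk 0 1 2 0 4 0)"
  "good (mk 0 1 2 0 4 1)"
  "good (mk 0 1 2 1 4 0)"
  "good (mk 0 1 2 1 4 1)"
  "good (mk 0 0 2 0 5 0)"
  "good (mk 0 0 2 0 5 1)"
  "good (mk 0 0 2 1 5 0)"
  "good (mk 0 0 2 1 5 1)"
  "good (mk 0 1 2 0 5 0)"
  "good (mk 0 1 2 0 5 1)"
  "good (mk 0 1 2 1 5 0)"
  "good (mk 0 1 2 1 5 1)"
  "good (mk 0 0 2 0 6 0)"
  "good (mk 0 0 2 0 6 1)"
  "good (mk 0 0 2 1 6 0)"
  "good (mk 0 0 2 1 6 1)"
  "good (mk 0 1 2 0 6 0)"
  "good (mk 0 1 2 0 6 1)"
  "good (mk 0 1 2 1 6 0)"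
  "good (mk 0 1 2 1 6 1)"
  "good (mk 0 0 3 0 4 0)"
  "good (mk 0 0 3 0 4 1)"
  "good (mk 0 0 3 1 4 0)"
  "good (mk 0 0 3 1 4 1)"
  "good (mk 0 1 3 0 4 0)"
  "good (mk 0 1 3 0 4 1)"
  "good (mk 0 1 3 1 4 0)"
  "good (mk 0 1 3 1 4 1)"
  "good (mk 0 0 3 0 5 0)"
  "good (mk 0 0 3 0 5 1)"
  "good (mk 0 0 3 1 5 0)"
  "good (mk 0 0 3 1 5 1)"
  "good (mk 0 1 3 0 5 0)"
  "good (mk 0 1 3 0 5 1)"
  "good (mk 0 1 3 1 5 0)"
  "good (mk 0 1 3 1 5 1)"
  "good (mk 0 0 3 0 6 0)"
  "good (mk 0 0 3 0 6 1)"
  "good (mk 0 0 3 1 6 0)"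
  "good (mk 0 0 3 1 6 1)"
  "good (mk 0 1 3 0 6 0)"
  "good (mk 0 1 3 0 6 1)"
  "good (mk 0 1 3 1 6 0)"
  "good (mk 0 1 3 1 6 1)"
  "good (mk 0 0 4 0 5 0)"
  "good (mk 0 0 4 0 5 1)"
  "good (mk 0 0 4 1 5 0)"
  "good (mk 0 0 4 1 5 1)"
  "good (mk 0 1 4 0 5 0)"
  "good (mk 0 1 4 0 5 1)"
  "good (mk 0 1 4 1 5 0)"
  "good (mk 0 1 4 1 5 1)"
  "good (mk 0 0 4 0 6 0)"
  "good (mk 0 0 4 0 6 1)"
  "good (mk 0 0 4 1 6 0)"
  "good (mk 0 0 4 1 6 1)"
  "good (mk 0 1 4 0 6 0)"
  "good (mk 0 1 4 0 6 1)"
  "good (mk 0 1 4 1 6 0)"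
  "good (mk 0 1 4 1 6 1)"
  "good (mk 0 0 5 0 6 0)"
  "good (mk 0 0 5 0 6 1)"
  "good (mk 0 0 5 1 6 0)"
  "good (mk 0 0 5 1 6 1)"
  "good (mk 0 1 5 0 6 0)"
  "good (mk 0 1 5 0 6 1)"
  "good (mk 0 1 5 1 6 0)"
  "good (mk 0 1 5 1 6 1)"
  "good (mk 1 0 2 0 3 0)"
  "good (mk 1 0 2 0 3 1)"
  "good (mk 1 0 2 1 3 0)"
  "good (mk 1 0 2 1 3 1)"
  "good (mk 1 1 2 0 3 0)"
  "good (mk 1 1 2 0 3 1)"
  "good (mk 1 1 2 1 3 0)"
  "good (mk 1 1 2 1 3 1)"
  "good (mk 1 0 2 0 4 0)"
  "good (mk 1 0 2 0 4 1)"
  "good (mk 1 0 2 1 4 0)"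
  "good (mk 1 0 2 1 4 1)"
  "good (mk 1 1 2 0 4 0)"
  "good (mk 1 1 2 0 4 1)"
  "good (mk 1 1 2 1 4 0)"
  "good (mk 1 1 2 1 4 1)"
  "good (mk 1 0 2 0 5 0)"
  "good (mk 1 0 2 0 5 1)"
  "good (mk 1 0 2 1 5 0)"
  "good (mk 1 0 2 1 5 1)"
  "good (mk 1 1 2 0 5 0)"
  "good (mk 1 1 2 0 5 1)"
  "good (mk 1 1 2 1 5 0)"
  "good (mk 1 1 2 1 5 1)"
  "good (mk 1 0 2 0 6 0)"
  "good (mk 1 0 2 0 6 1)"
  "good (mk 1 0 2 1 6 0)"
  "good (mk 1 0 2 1 6 1)"
  "good (mk 1 1 2 0 6 0)"
  "good (mk 1 1 2 0 6 1)"
  "good (mk 1 1 2 1 6 0)"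
  "good (mk 1 1 2 1 6 1)"
  "good (mk 1 0 3 0 4 0)"
  "good (mk 1 0 3 0 4 1)"
  "good (mk 1 0 3 1 4 0)"
  "good (mk 1 0 3 1 4 1)"
  "good (mk 1 1 3 0 4 0)"
  "good (mk 1 1 3 0 4 1)"
  "good (mk 1 1 3 1 4 0)"
  "good (mk 1 1 3 1 4 1)"
  "good (mk 1 0 3 0 5 0)"
  "good (mk 1 0 3 0 5 1)"
  "good (mk 1 0 3 1 5 0)"
  "good (mk 1 0 3 1 5 1)"
  "good (mk 1 1 3 0 5 0)"
  "good (mk 1 1 3 0 5 1)"
  "good (mk 1 1 3 1 5 0)"
  "good (mk 1 1 3 1 5 1)"
  "good (mk 1 0 3 0 6 0)"
  "good (mk 1 0 3 0 6 1)"
  "good (mk 1 0 3 1 6 0)"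
  "good (mk 1 0 3 1 6 1)"
  "good (mk 1 1 3 0 6 0)"
  "good (mk 1 1 3 0 6 1)"
  "good (mk 1 1 3 1 6 0)"
  "good (mk 1 1 3 1 6 1)"
  "good (mk 1 0 4 0 5 0)"
  "good (mk 1 0 4 0 5 1)"
  "good (mk 1 0 4 1 5 0)"
  "good (mk 1 0 4 1 5 1)"
  "good (mk 1 1 4 0 5 0)"
  "good (mk 1 1 4 0 5 1)"
  "good (mk 1 1 4 1 5 0)"
  "good (mk 1 1 4 1 5 1)"
  "good (mk 1 0 4 0 6 0)"
  "good (mk 1 0 4 0 6 1)"
  "good (mk 1 0 4 1 6 0)"
  "good (mk 1 0 4 1 6 1)"
  "good (mk 1 1 4 0 6 0)"
  "good (mk 1 1 4 0 6 1)"
  "good (mk 1 1 4 1 6 0)"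
  "good (mk 1 1 4 1 6 1)"
  "good (mk 1 0 5 0 6 0)"
  "good (mk 1 0 5 0 6 1)"
  "good (mk 1 0 5 1 6 0)"
  "good (mk 1 0 5 1 6 1)"
  "good (mk 1 1 5 0 6 0)"
  "good (mk 1 1 5 0 6 1)"
  "good (mk 1 1 5 1 6 0)"
  "good (mk 1 1 5 1 6 1)"
  "good (mk 2 0 3 0 4 0)"
  "good (mk 2 0 3 0 4 1)"
  "good (mk 2 0 3 1 4 0)"
  "good (mk 2 0 3 1 4 1)"
  "good (mk 2 1 3 0 4 0)"
  "good (mk 2 1 3 0 4 1)"
  "good (mk 2 1 3 1 4 0)"
  "good (mk 2 1 3 1 4 1)"
  "good (mk 2 0 3 0 5 0)"
  "good (mk 2 0 3 0 5 1)"
  "good (mk 2 0 3 1 5 0)"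
  "good (mk 2 0 3 1 5 1)"
  "good (mk 2 1 3 0 5 0)"
  "good (mk 2 1 3 0 5 1)"
  "good (mk 2 1 3 1 5 0)"
  "good (mk 2 1 3 1 5 1)"
  "good (mk 2 0 3 0 6 0)"
  "good (mk 2 0 3 0 6 1)"
  "good (mk 2 0 3 1 6 0)"
  "good (mk 2 0 3 1 6 1)"
  "good (mk 2 1 3 0 6 0)"
  "good (mk 2 1 3 0 6 1)"
  "good (mk 2 1 3 1 6 0)"
  "good (mk 2 1 3 1 6 1)"
  "good (mk 2 0 4 0 5 0)"
  "good (mk 2 0 4 0 5 1)"
  "good (mk 2 0 4 1 5 0)"
  "good (mk 2 0 4 1 5 1)"
  "good (mk 2 1 4 0 5 0)"
  "good (mk 2 1 4 0 5 1)"
  "good (mk 2 1 4 1 5 0)"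
  "good (mk 2 1 4 1 5 1)"
  "good (mk 2 0 4 0 6 0)"
  "good (mk 2 0 4 0 6 1)"
  "good (mk 2 0 4 1 6 0)"
  "good (mk 2 0 4 1 6 1)"
  "good (mk 2 1 4 0 6 0)"
  "good (mk 2 1 4 0 6 1)"
  "good (mk 2 1 4 1 6 0)"
  "good (mk 2 1 4 1 6 1)"
  "good (mk 2 0 5 0 6 0)"
  "good (mk 2 0 5 0 6 1)"
  "good (mk 2 0 5 1 6 0)"
  "good (mk 2 0 5 1 6 1)"
  "good (mk 2 1 5 0 6 0)"
  "good (mk 2 1 5 0 6 1)"
  "good (mk 2 1 5 1 6 0)"
  "good (mk 2 1 5 1 6 1)"
  "good (mk 3 0 4 0 5 0)"
  "good (mk 3 0 4 0 5 1)"
  "good (mk 3 0 4 1 5 0)"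
  "good (mk 3 0 4 1 5 1)"
  "good (mk 3 1 4 0 5 0)"
  "good (mk 3 1 4 0 5 1)"
  "good (mk 3 1 4 1 5 0)"
  "good (mk 3 1 4 1 5 1)"
  "good (mk 3 0 4 0 6 0)"
  "good (mk 3 0 4 0 6 1)"
  "good (mk 3 0 4 1 6 0)"
  "good (mk 3 0 4 1 6 1)"
  "good (mk 3 1 4 0 6 0)"
  "good (mk 3 1 4 0 6 1)"
  "good (mk 3 1 4 1 6 0)"
  "good (mk 3 1 4 1 6 1)"
  "good (mk 3 0 5 0 6 0)"
  "good (mk 3 0 5 0 6 1)"
  "good (mk 3 0 5 1 6 0)"
  "good (mk 3 0 5 1 6 1)"
  "good (mk 3 1 5 0 6 0)"
  "good (mk 3 1 5 0 6 1)"
  "good (mk 3 1 5 1 6 0)"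
  "good (mk 3 1 5 1 6 1)"
  "good (mk 4 0 5 0 6 0)"
  "good (mk 4 0 5 0 6 1)"
  "good (mk 4 0 5 1 6 0)"
  "good (mk 4 0 5 1 6 1)"
  "good (mk 4 1 5 0 6 0)"
  "good (mk 4 1 5 0 6 1)"
  "good (mk 4 1 5 1 6 0)"
  "good (mk 4 1 5 1 6 1)"
  by (simp_all add: good_def vals_def exts_def mk_def upt_rec del: distinct.simps, simp_all add: lkp_def lk_def tab_num)

lemma less7: "(x::nat) < 7 \<longleftrightarrow> x = 0 \<or> x = 1 \<or> x = 2 \<or> x = 3 \<or> x = 4 \<or> x = 5 \<or> x = 6" by arith
lemma all7: "(\<forall>x<(7::nat). P x) \<longleftrightarrow> P 0 \<and> P 1 \<and> P 2 \<and> P 3 \<and> P 4 \<and> P 5 \<and> P 6"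
  unfolding less7 by blast
lemma less2: "(x::nat) < 2 \<longleftrightarrow> x = 0 \<or> x = 1" by arith
lemma all2: "(\<forall>x<(2::nat). P x) \<longleftrightarrow> P 0 \<and> P 1"
  unfolding less2 by blast
lemma check_sorted: "\<forall>x1<7. \<forall>x2<7. \<forall>x3<7. \<forall>e1<2. \<forall>e2<2. \<forall>e3<2. x1 < x2 \<longrightarrow> x2 < x3 \<longrightarrow> good (mk x1 e1 x2 e2 x3 e3)"
  unfolding all7 all2 using gi by simp

lemma mk_swap12: "a \<noteq> b \<Longrightarrow> mk a f1 b f2 c f3 = mk b f2 a f1 c f3"
  unfolding mk_def by auto
lemma mk_swap23: "b \<noteq> c \<Longrightarrow> mk a f1 b f2 c f3 = mk a f1 c f3 b f2"
  unfolding mk_def by auto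

lemma good_mk:
  assumes "x1 < 7" "x2 < 7" "x3 < 7" "x1 \<noteq> x2" "x1 \<noteq> x3" "x2 \<noteq> x3" "e1 < 2" "e2 < 2" "e3 < 2"
  shows "good (mk x1 e1 x2 e2 x3 e3)"
proof -
  have cs: "\<And>a b c f1 f2 f3. a < b \<Longrightarrow> b < c \<Longrightarrow> c < 7 \<Longrightarrow> f1 < 2 \<Longrightarrow> f2 < 2 \<Longrightarrow> f3 < 2
     \<Longrightarrow> good (mk a f1 b f2 c f3)"
    using check_sorted by (meson order.strict_trans)
  consider "x1 < x2" "x2 < x3" | "x1 < x3" "x3 < x2" | "x2 < x1" "x1 < x3"
    | "x2 < x3" "x3 < x1" | "x3 < x1" "x1 < x2" | "x3 < x2" "x2 < x1"
    using assms(4-6) by (meson linorder_neqE_nat)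
  then show ?thesis
  proof cases
    case 1 then show ?thesis using cs assms by blast
  next
    case 2 then show ?thesis using cs assms mk_swap23 by metis
  next
    case 3 then show ?thesis using cs assms mk_swap12 by metis
  next
    case 4 then show ?thesis using cs[of x2 x3 x1 e2 e3 e1] assms mk_swap12 mk_swap23 by metis
  next
    case 5 then show ?thesis using cs[of x3 x1 x2 e3 e1 e2] assms mk_swap12 mk_swap23 by metis
  next
    case 6 then show ?thesis using cs[of x3 x2 x1 e3 e2 e1] assms mk_swap12 mk_swap23 by metis
  qed
qed

lemma lk_lt: "lk v < 8" unfolding lk_def by simp

lemma set_exts: "(y, e) \<in> set (exts v) \<longleftrightarrow> y < 7 \<and> v y = 0 \<and> e < 2"
  unfolding exts_def by (auto simp: less_Suc_eq numeral_eq_Suc)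

lemma good_surj:
  assumes "good v" "d < 8"
  shows "\<exists>y e. y < 7 \<and> v y = 0 \<and> e < 2 \<and> lk (v(y := Suc e)) = d"
proof -
  have "set (vals v) \<subseteq> {..<8}" unfolding vals_def lkp_def using lk_lt by auto
  moreover have "card (set (vals v)) = 8" using assms(1) distinct_card unfolding good_def by metis
  ultimately have "set (vals v) = {..<8}" by (intro card_subset_eq) auto
  then have "d \<in> set (vals v)" using assms(2) by auto
  then obtain y e where "(y, e) \<in> set (exts v)" "lkp v (y, e) = d" unfolding vals_def by auto
  then show ?thesis unfolding lkp_def by (auto simp: set_exts)
qed

lemma good_inj:
  assumes "good v" "y < 7" "v y = 0" "e < 2" "y' < 7" "v y' = 0" "e' < 2"
    "lk (v(y := Suc e)) = lk (v(y' := Suc e'))"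
  shows "y = y' \<and> e = e'"
proof -
  have inj: "inj_on (lkp v) (set (exts v))" using assms(1) unfolding good_def vals_def distinct_map by auto
  have mem: "(y, e) \<in> set (exts v)" "(y', e') \<in> set (exts v)" using assms by (auto simp: set_exts)
  have "lkp v (y, e) = lkp v (y', e')" using assms(8) by (simp add: lkp_def)
  then have "(y, e) = (y', e')" using inj_onD[OF inj] mem by blast
  then show ?thesis by simp
qed

lemma gp_same_group:
  assumes "group_partition Q G n g" "X \<in> G" "Y \<in> G" "p \<in> X" "p \<in> Y"
  shows "X = Y"
  using assms unfolding group_partition_def by blast

lemma gp_trans:
  assumes "group_partition Q G n g"
    and "\<And>p q X. p \<in> S \<Longrightarrow> q \<in> S \<Longrightarrow> X \<in> G \<Longrightarrow> p \<in> X \<Longrightarrow> q \<in> X \<Longrightarrow> p = q"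
  shows "transversal G S"
  unfolding transversal_def
proof
  fix X assume X: "X \<in> G"
  show "card (S \<inter> X) \<le> 1"
  proof (cases "finite (S \<inter> X)")
    case True
    then show ?thesis using assms(2)[OF _ _ X] by (auto simp: card_le_Suc0_iff_eq)
  next
    case False
    then show ?thesis by simp
  qed
qed

lemma trans_same:
  assumes "transversal G S" "X \<in> G" "p \<in> S" "q \<in> S" "p \<in> X" "q \<in> X" "finite S"
  shows "p = q"
proof -
  have "card (S \<inter> X) \<le> Suc 0" using assms(1,2) unfolding transversal_def by auto
  then show ?thesis using assms(3-7) by (auto simp: card_le_Suc0_iff_eq)
qed


definition QQ :: "nat \<Rightarrow> nat set" where "QQ g = {..<7*g}"
definition grp :: "nat \<Rightarrow> nat \<Rightarrow> nat set" where "grp g x = {p. p < 7*g \<and> p mod 7 = x}"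
definition GG :: "nat \<Rightarrow> nat set set" where "GG g = grp g ` {..<7}"
definition ebit :: "nat \<Rightarrow> nat" where "ebit p = p div 7 mod 2"
definition cc :: "nat \<Rightarrow> nat" where "cc p = p div 14"
definition digit :: "nat set \<Rightarrow> nat \<Rightarrow> nat" where
  "digit S x = (\<Sum>p\<in>{p\<in>S. p mod 7 = x}. Suc (ebit p))"
definition FF :: "nat \<Rightarrow> nat set \<Rightarrow> nat \<times> nat" where
  "FF m S = (lk (digit S), (\<Sum>p\<in>S. cc p) mod m)"

lemma grp_eq:
  assumes "x < 7" shows "grp g x = (\<lambda>i. x + 7*i) ` {..<g}"
proof (intro set_eqI iffI)
  fix p assume "p \<in> grp g x"
  then have p: "p < 7*g" "p mod 7 = x" by (auto simp: grp_def)
  have "p = x + 7*(p div 7)" using p(2) div_mult_mod_eq[of p 7] by simp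
  moreover have "p div 7 < g" using p(1) by simp
  ultimately show "p \<in> (\<lambda>i. x + 7*i) ` {..<g}" by blast
next
  fix p assume "p \<in> (\<lambda>i. x + 7*i) ` {..<g}"
  then obtain i where i: "i < g" "p = x + 7*i" by auto
  then show "p \<in> grp g x" using assms by (auto simp: grp_def)
qed

lemma grp_card: "x < 7 \<Longrightarrow> card (grp g x) = g"
  unfolding grp_eq by (subst card_image) (auto simp: inj_on_def)

lemma grp_in: "x < 7 \<Longrightarrow> g > 0 \<Longrightarrow> x \<in> grp g x"
  unfolding grp_def by simp

lemma gp: assumes "g > 0" shows "group_partition (QQ g) (GG g) 7 g"
proof -
  have U: "\<Union>(GG g) = QQ g"
  proof
    show "\<Union>(GG g) \<subseteq> QQ g" unfolding GG_def grp_def QQ_def by auto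
    show "QQ g \<subseteq> \<Union>(GG g)"
    proof
      fix p assume "p \<in> QQ g"
      then have "p \<in> grp g (p mod 7)" "p mod 7 < 7" unfolding QQ_def grp_def by auto
      then show "p \<in> \<Union>(GG g)" unfolding GG_def by blast
    qed
  qed
  have inj: "inj_on (grp g) {..<7}"
  proof (rule inj_onI)
    fix x y assume xy: "x \<in> {..<7}" "y \<in> {..<7}" "grp g x = grp g y"
    then have "x \<in> grp g y" using grp_in[of x g] assms by auto
    then show "x = y" using xy unfolding grp_def by auto
  qed
  have c: "card (GG g) = 7" unfolding GG_def using card_image[OF inj] by simp
  have X: "\<forall>X\<in>GG g. X \<noteq> {} \<and> finite X \<and> card X = g"
  proof
    fix X assume "X \<in> GG g"
    then obtain x where x: "x < 7" "X = grp g x" unfolding GG_def by auto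
    have "finite X" unfolding x grp_eq[OF x(1)] by simp
    moreover have "X \<noteq> {}" using grp_in[OF x(1) assms] x(2) by auto
    ultimately show "X \<noteq> {} \<and> finite X \<and> card X = g" using x grp_card by auto
  qed
  have D: "\<forall>X\<in>GG g. \<forall>Y\<in>GG g. X \<noteq> Y \<longrightarrow> X \<inter> Y = {}"
    unfolding GG_def grp_def by auto
  show ?thesis unfolding group_partition_def using U c X D unfolding GG_def by auto
qed

lemma trans_iff:
  assumes "S \<subseteq> QQ g" "g > 0"
  shows "transversal (GG g) S \<longleftrightarrow> inj_on (\<lambda>p. p mod 7) S"
proof
  have fS: "finite S" using assms(1) finite_subset unfolding QQ_def by blast
  assume tr: "transversal (GG g) S"
  show "inj_on (\<lambda>p. p mod 7) S"
  proof (rule inj_onI)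
    fix p q assume pq: "p \<in> S" "q \<in> S" "p mod 7 = q mod 7"
    have X: "grp g (p mod 7) \<in> GG g" unfolding GG_def by simp
    have "p \<in> grp g (p mod 7)" "q \<in> grp g (p mod 7)" using pq assms(1) unfolding grp_def QQ_def by auto
    then show "p = q" using trans_same[OF tr X pq(1,2) _ _ fS] by blast
  qed
next
  assume inj: "inj_on (\<lambda>p. p mod 7) S"
  show "transversal (GG g) S"
  proof (rule gp_trans[OF gp[OF assms(2)]])
    fix p q X assume "p \<in> S" "q \<in> S" "X \<in> GG g" "p \<in> X" "q \<in> X"
    then show "p = q" using inj unfolding GG_def grp_def inj_on_def by auto
  qed
qed

lemma digit_empty: "digit {} = (\<lambda>x. 0)"
  unfolding digit_def by (rule ext) simp

lemma digit_insert:
  assumes "finite S" "p \<notin> S"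
  shows "digit (insert p S) = (\<lambda>x. (if p mod 7 = x then Suc (ebit p) else 0) + digit S x)"
proof (rule ext)
  fix x
  have e: "{q \<in> insert p S. q mod 7 = x} = (if p mod 7 = x then insert p {q \<in> S. q mod 7 = x} else {q \<in> S. q mod 7 = x})"
    by auto
  show "digit (insert p S) x = (if p mod 7 = x then Suc (ebit p) else 0) + digit S x"
    unfolding digit_def e using assms by simp
qed

lemma ebit_lt: "ebit p < 2" unfolding ebit_def by simp

lemma p_decomp: "p = p mod 7 + 7 * (ebit p + 2 * cc p)"
proof -
  have "p div 7 = p div 7 mod 2 + 2 * (p div 7 div 2)" by simp
  moreover have "p div 14 = p div 7 div 2" using div_mult2_eq[of p 7 2] by simp
  ultimately have "p div 7 = ebit p + 2 * cc p" unfolding ebit_def cc_def by simp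
  then show ?thesis using div_mult_mod_eq[of p 7] by simp
qed

lemma mod_cancel_lt:
  fixes a b s m :: nat
  assumes "(a + s) mod m = (b + s) mod m" "a < m" "b < m"
  shows "a = b"
proof -
  define r where "r = s mod m"
  have r: "r < m" using assms(2) unfolding r_def by simp
  have eq: "(a + r) mod m = (b + r) mod m" using assms(1) unfolding r_def by (simp add: mod_add_right_eq)
  have h: "(x + r) mod m = (if x + r < m then x + r else x + r - m)" if "x < m" for x
  proof (cases "x + r < m")
    case True then show ?thesis by simp
  next
    case False
    then have "(x + r) mod m = (x + r - m) mod m" by (simp add: le_mod_geq)
    also have "\<dots> = x + r - m" using that r by simp
    finally show ?thesis using False by simp
  qed
  show ?thesis using eq h[OF assms(2)] h[OF assms(3)] assms(2,3) r by (auto split: if_splits)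
qed
lemma mod_target:
  fixes d s m :: nat
  assumes "d < m"
  shows "((d + m - s mod m) mod m + s) mod m = d"
proof -
  have "((d + m - s mod m) mod m + s) mod m = ((d + m - s mod m) + s) mod m"
    by (rule mod_add_left_eq)
  also have "\<dots> = ((d + m - s mod m) + s mod m) mod m"
    by (rule mod_add_right_eq[symmetric])
  also have "s mod m \<le> d + m" using assms by (simp add: less_imp_le trans_le_add2)
  then have "(d + m - s mod m) + s mod m = d + m" by simp
  finally show ?thesis using assms by simp
qed

lemma core:
  assumes g: "g = 2*m" "m > 0" and T: "T \<in> trans_ksets (QQ g) (GG g) 3" and d: "d1 < 8" "d2 < m"
  shows "\<exists>!b. b \<in> trans_ksets (QQ g) (GG g) 4 \<and> FF m b = (d1, d2) \<and> T \<subseteq> b"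
proof -
  have gpos: "g > 0" using g by simp
  have TQ: "T \<subseteq> QQ g" and cT: "card T = 3" and trT: "transversal (GG g) T"
    using T unfolding trans_ksets_def by auto
  have injT: "inj_on (\<lambda>p. p mod 7) T" using trans_iff[OF TQ gpos] trT by simp
  have fT: "finite T" using cT by (intro card_ge_0_finite) simp
  obtain p1 p2 p3 where T3: "T = {p1, p2, p3}" "p1 \<noteq> p2" "p2 \<noteq> p3" "p1 \<noteq> p3"
    using cT unfolding card_3_iff by blast
  define x1 x2 x3 where "x1 = p1 mod 7" "x2 = p2 mod 7" "x3 = p3 mod 7"
  have xd: "x1 \<noteq> x2" "x1 \<noteq> x3" "x2 \<noteq> x3" using injT T3 unfolding x1_x2_x3_def inj_on_def by auto
  have xl: "x1 < 7" "x2 < 7" "x3 < 7" unfolding x1_x2_x3_def by auto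
  define v where "v = mk x1 (ebit p1) x2 (ebit p2) x3 (ebit p3)"
  have dT: "digit T = v"
  proof -
    have "digit T = (\<lambda>x. (if p1 mod 7 = x then Suc (ebit p1) else 0) + ((if p2 mod 7 = x then Suc (ebit p2) else 0)
       + ((if p3 mod 7 = x then Suc (ebit p3) else 0) + 0)))"
      unfolding T3 using T3(2-4) by (simp add: digit_insert digit_empty)
    then show ?thesis unfolding v_def mk_def x1_x2_x3_def using xd unfolding x1_x2_x3_def
      by (auto intro!: ext)
  qed
  have gv: "good v" unfolding v_def using good_mk[OF xl xd ebit_lt ebit_lt ebit_lt] .
  have v0: "v y = 0 \<longleftrightarrow> y \<noteq> x1 \<and> y \<noteq> x2 \<and> y \<noteq> x3" for y unfolding v_def mk_def by auto
  define s where "s = (\<Sum>q\<in>T. cc q)"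
  have extF: "FF m (insert p T) = (lk (v(p mod 7 := Suc (ebit p))), (cc p + s) mod m)"
    if "v (p mod 7) = 0" for p
  proof -
    have pT: "p \<notin> T" using that v0 unfolding T3 x1_x2_x3_def by auto
    have "digit (insert p T) = v(p mod 7 := Suc (ebit p))"
      unfolding digit_insert[OF fT pT] dT using that by (auto intro!: ext)
    moreover have "(\<Sum>q\<in>insert p T. cc q) = cc p + s" unfolding s_def using fT pT by simp
    ultimately show ?thesis unfolding FF_def by simp
  qed
  have K4: "insert p T \<in> trans_ksets (QQ g) (GG g) 4" if "v (p mod 7) = 0" "p < 7 * g" for p
  proof -
    have pT: "p \<notin> T" using that v0 unfolding T3 x1_x2_x3_def by auto
    have sub: "insert p T \<subseteq> QQ g" using TQ that(2) unfolding QQ_def by auto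
    have "inj_on (\<lambda>p. p mod 7) (insert p T)"
      using injT that(1) v0 unfolding T3 x1_x2_x3_def by auto
    then have "transversal (GG g) (insert p T)" using trans_iff[OF sub gpos] by simp
    moreover have "card (insert p T) = 4" using fT pT cT by simp
    ultimately show ?thesis using sub unfolding trans_ksets_def by simp
  qed
  have shape: "\<exists>p. b = insert p T \<and> v (p mod 7) = 0 \<and> p < 7 * g"
    if b: "b \<in> trans_ksets (QQ g) (GG g) 4" "T \<subseteq> b" for b
  proof -
    have bQ: "b \<subseteq> QQ g" and cb: "card b = 4" and trb: "transversal (GG g) b"
      using b unfolding trans_ksets_def by auto
    have fb: "finite b" using cb by (intro card_ge_0_finite) simp
    have "card (b - T) = 1" using b(2) fb fT cb cT by (simp add: card_Diff_subset)
    then obtain p where p: "b - T = {p}" by (rule card_1_singletonE)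
    have bi: "b = insert p T" using p b(2) by blast
    have pT: "p \<notin> T" using p by blast
    have injb: "inj_on (\<lambda>p. p mod 7) b" using trans_iff[OF bQ gpos] trb by simp
    have "p mod 7 \<noteq> x1" "p mod 7 \<noteq> x2" "p mod 7 \<noteq> x3"
      using injb pT unfolding bi T3 x1_x2_x3_def inj_on_def by auto
    then have "v (p mod 7) = 0" using v0 by simp
    moreover have "p < 7 * g" using bQ bi unfolding QQ_def by auto
    ultimately show ?thesis using bi by blast
  qed
  show ?thesis
  proof (rule ex_ex1I)
    obtain y e where ye: "y < 7" "v y = 0" "e < 2" "lk (v(y := Suc e)) = d1"
      using good_surj[OF gv d(1)] by blast
    define c' where "c' = (d2 + m - s mod m) mod m"
    have c'm: "c' < m" unfolding c'_def using g(2) by simp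
    define p where "p = y + 7 * (e + 2 * c')"
    have p7: "p = y + (e + 2 * c') * 7" unfolding p_def by simp
    have pm: "p mod 7 = y" unfolding p7 using ye(1) by (metis mod_mult_self1 mod_mult_self2 mod_less)
    have pd: "p div 7 = e + 2 * c'" unfolding p7 using ye(1) by simp
    have pe: "ebit p = e" unfolding ebit_def pd using ye(3) by simp
    have pc: "cc p = c'" unfolding cc_def using div_mult2_eq[of p 7 2] pd ye(3) by simp
    have "Suc c' \<le> m" "e \<le> 1" "y \<le> 6" using ye(1,3) c'm by auto
    then have plt: "p < 7 * g" unfolding p_def g(1) by presburger
    have "insert p T \<in> trans_ksets (QQ g) (GG g) 4" using K4[of p] pm ye(2) plt by simp
    moreover have "FF m (insert p T) = (d1, d2)"
      using extF[of p] pm ye pe pc mod_target[OF d(2), of s] unfolding c'_def by simp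
    ultimately show "\<exists>b. b \<in> trans_ksets (QQ g) (GG g) 4 \<and> FF m b = (d1, d2) \<and> T \<subseteq> b" by blast
  next
    fix b b'
    assume b: "b \<in> trans_ksets (QQ g) (GG g) 4 \<and> FF m b = (d1, d2) \<and> T \<subseteq> b"
      and b': "b' \<in> trans_ksets (QQ g) (GG g) 4 \<and> FF m b' = (d1, d2) \<and> T \<subseteq> b'"
    obtain p where p: "b = insert p T" "v (p mod 7) = 0" "p < 7 * g" using shape b by blast
    obtain p' where p': "b' = insert p' T" "v (p' mod 7) = 0" "p' < 7 * g" using shape b' by blast
    have e1: "lk (v(p mod 7 := Suc (ebit p))) = lk (v(p' mod 7 := Suc (ebit p')))"
      and e2: "(cc p + s) mod m = (cc p' + s) mod m"
      using extF[OF p(2)] extF[OF p'(2)] b b' p(1) p'(1) by auto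
    have "p mod 7 = p' mod 7 \<and> ebit p = ebit p'"
      using good_inj[OF gv _ p(2) ebit_lt _ p'(2) ebit_lt e1] by simp
    moreover have "cc p < m" "cc p' < m" using p(3) p'(3) unfolding cc_def g(1) by auto
    then have "cc p = cc p'" using mod_cancel_lt[OF e2] by simp
    ultimately have "p = p'" using p_decomp[of p] p_decomp[of p'] by metis
    then show "b = b'" using p(1) p'(1) by simp
  qed
qed

lemma suff:
  assumes "g > 0" "even g"
  shows "\<exists>(Q :: nat set) G L. large_H_set 7 g 4 3 Q G L"
proof -
  define m where "m = g div 2"
  have g: "g = 2 * m" "m > 0" using assms unfolding m_def by auto
  define K4 where "K4 = trans_ksets (QQ g) (GG g) 4"
  define cls where "cls d = {S \<in> K4. FF m S = d}" for d
  define L where "L = cls ` (FF m ` K4)"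
  have fQ: "finite (QQ g)" "card (QQ g) = 7 * g" unfolding QQ_def by auto
  have gpg: "group_partition (QQ g) (GG g) 7 g" using gp[OF assms(1)] .
  have U: "\<Union>L = K4" unfolding L_def cls_def by auto
  have D: "\<forall>B1\<in>L. \<forall>B2\<in>L. B1 \<noteq> B2 \<longrightarrow> B1 \<inter> B2 = {}" unfolding L_def cls_def by auto
  have H: "\<forall>B\<in>L. H_design 7 g 4 3 (QQ g) (GG g) B"
  proof
    fix B assume "B \<in> L"
    then obtain S0 where S0: "S0 \<in> K4" "B = cls (FF m S0)" unfolding L_def by auto
    obtain d1 d2 where dd: "FF m S0 = (d1, d2)" by fastforce
    have d: "d1 < 8" "d2 < m" using dd lk_lt g(2) unfolding FF_def by auto
    have "\<forall>T \<in> trans_ksets (QQ g) (GG g) 3. \<exists>!b. b \<in> B \<and> T \<subseteq> b"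
    proof
      fix T assume "T \<in> trans_ksets (QQ g) (GG g) 3"
      from core[OF g this d] show "\<exists>!b. b \<in> B \<and> T \<subseteq> b"
        unfolding S0(2) dd cls_def K4_def by simp
    qed
    moreover have "B \<subseteq> trans_ksets (QQ g) (GG g) 4" unfolding S0(2) cls_def K4_def by auto
    ultimately show "H_design 7 g 4 3 (QQ g) (GG g) B"
      unfolding H_design_def using fQ gpg by simp
  qed
  have "large_H_set 7 g 4 3 (QQ g) (GG g) L"
    unfolding large_H_set_def using fQ gpg U D H unfolding K4_def by simp
  then show ?thesis by blast
qed


lemma nec:
  assumes L: "large_H_set 7 g 4 3 Q G L" and gpos: "g > 0"
  shows "even g"
proof -
  have fQ: "finite Q" and cQ: "card Q = 7 * g" and gp: "group_partition Q G 7 g"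
    and UL: "\<Union>L = trans_ksets Q G 4" and des: "\<And>B. B \<in> L \<Longrightarrow> H_design 7 g 4 3 Q G B"
    using L unfolding large_H_set_def by auto
  have UG: "\<Union>G = Q" and cG: "card G = 7" and fG: "finite G"
    and Gx: "\<And>X. X \<in> G \<Longrightarrow> X \<noteq> {} \<and> finite X \<and> card X = g"
    and Gd: "\<And>X Y. X \<in> G \<Longrightarrow> Y \<in> G \<Longrightarrow> X \<noteq> Y \<Longrightarrow> X \<inter> Y = {}"
    using gp unfolding group_partition_def by auto
  have sub: "\<And>X. X \<in> G \<Longrightarrow> X \<subseteq> Q" using UG by blast
  have outside: "\<exists>c\<in>Q. \<forall>X\<in>F. c \<notin> X" if "F \<subseteq> G" "card F < 7" for F
  proof -
    have fF: "finite F" using that(1) fG finite_subset by blast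
    have "card (\<Union>F) \<le> (\<Sum>X\<in>F. card X)" using card_Union_le_sum_card by blast
    also have "\<dots> = card F * g" using Gx that(1) by (simp add: subset_iff)
    also have "\<dots> < 7 * g" using that(2) gpos by simp
    finally have "card (\<Union>F) < card Q" using cQ by simp
    moreover have "finite (\<Union>F)" using fF Gx that(1) by auto
    ultimately have "\<not> Q \<subseteq> \<Union>F" using card_mono by (metis leD)
    then show ?thesis by blast
  qed
  obtain G1 where G1: "G1 \<in> G" using cG by fastforce
  obtain b where b: "b \<in> Q" "\<forall>X\<in>{G1}. b \<notin> X" using outside[of "{G1}"] G1 by auto
  obtain G2 where G2: "G2 \<in> G" "b \<in> G2" using b UG by blast
  obtain a where a: "a \<in> G1" using Gx G1 by blast
  have G12: "G1 \<noteq> G2" using b G2 by auto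
  have aQ: "a \<in> Q" using a G1 sub by blast
  define C where "C = Q - (G1 \<union> G2)"
  have cC: "card C = 5 * g"
  proof -
    have "card (G1 \<union> G2) = g + g" using Gx[OF G1] Gx[OF G2(1)] Gd[OF G1 G2(1) G12]
      by (simp add: card_Un_disjoint)
    moreover have "G1 \<union> G2 \<subseteq> Q" using sub G1 G2 by blast
    ultimately show ?thesis unfolding C_def using cQ Gx[OF G1] Gx[OF G2(1)]
      by (simp add: card_Diff_subset)
  qed
  have grp_of: "\<exists>X\<in>G. p \<in> X" if "p \<in> Q" for p using that UG by blast
  have T3: "{a, b, c} \<in> trans_ksets Q G 3" if c: "c \<in> C" for c
  proof -
    have cq: "c \<in> Q" "c \<notin> G1" "c \<notin> G2" using c unfolding C_def by auto
    have ab: "a \<noteq> b" using a b by auto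
    have "a \<noteq> c" "b \<noteq> c" using a G2 cq by auto
    then have card3: "card {a, b, c} = 3" using ab by simp
    have "transversal G {a, b, c}"
    proof (rule gp_trans[OF gp])
      fix p q X assume pq: "p \<in> {a, b, c}" "q \<in> {a, b, c}" "X \<in> G" "p \<in> X" "q \<in> X"
      have "a \<in> X \<Longrightarrow> X = G1" using gp_same_group[OF gp _ G1] pq(3) a by blast
      moreover have "b \<in> X \<Longrightarrow> X = G2" using gp_same_group[OF gp _ G2(1)] pq(3) G2 by blast
      ultimately show "p = q" using pq G12 a G2 cq b by auto
    qed
    then show ?thesis unfolding trans_ksets_def using card3 aQ b cq by auto
  qed
  obtain c0 where c0: "c0 \<in> C"
  proof -
    have "C \<noteq> {}" using cC gpos by auto
    then show ?thesis using that by blast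
  qed
  obtain G3 where G3: "G3 \<in> G" "c0 \<in> G3" using grp_of c0 unfolding C_def by blast
  have G3n: "G3 \<noteq> G1" "G3 \<noteq> G2" using G3 c0 unfolding C_def by auto
  obtain d0 where d0: "d0 \<in> Q" "\<forall>X\<in>{G1, G2, G3}. d0 \<notin> X"
  proof -
    have "card {G1, G2, G3} = 3" using G12 G3n by auto
    then show ?thesis using outside[of "{G1, G2, G3}"] G1 G2 G3 that by auto
  qed
  have "{a, b, c0, d0} \<in> trans_ksets Q G 4"
  proof -
    have cq: "c0 \<in> Q" "c0 \<notin> G1" "c0 \<notin> G2" using c0 unfolding C_def by auto
    have ne: "a \<noteq> b" "a \<noteq> c0" "b \<noteq> c0" "a \<noteq> d0" "b \<noteq> d0" "c0 \<noteq> d0"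
      using a b cq G2 d0 G3 by auto
    then have card4: "card {a, b, c0, d0} = 4" by simp
    have "transversal G {a, b, c0, d0}"
    proof (rule gp_trans[OF gp])
      fix p q X assume pq: "p \<in> {a, b, c0, d0}" "q \<in> {a, b, c0, d0}" "X \<in> G" "p \<in> X" "q \<in> X"
      have "a \<in> X \<Longrightarrow> X = G1" using gp_same_group[OF gp _ G1] pq(3) a by blast
      moreover have "b \<in> X \<Longrightarrow> X = G2" using gp_same_group[OF gp _ G2(1)] pq(3) G2 by blast
      moreover have "c0 \<in> X \<Longrightarrow> X = G3" using gp_same_group[OF gp _ G3(1)] pq(3) G3 by blast
      ultimately show "p = q" using pq G12 G3n a G2 G3 cq b d0 by auto
    qed
    then show ?thesis unfolding trans_ksets_def using card4 aQ b cq d0 by auto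
  qed
  then obtain B where B: "B \<in> L" using UL by blast
  have HB: "H_design 7 g 4 3 Q G B" using des B .
  have Bsub: "B \<subseteq> trans_ksets Q G 4" and uniq: "\<And>T. T \<in> trans_ksets Q G 3 \<Longrightarrow> \<exists>!bl. bl \<in> B \<and> T \<subseteq> bl"
    using HB unfolding H_design_def by auto
  define Bab where "Bab = {bl \<in> B. a \<in> bl \<and> b \<in> bl}"
  have blk: "finite bl \<and> card bl = 4 \<and> bl \<subseteq> Q \<and> transversal G bl" if "bl \<in> B" for bl
    using Bsub that unfolding trans_ksets_def by (auto intro: finite_subset[OF _ fQ])
  have part: "C = (\<Union>bl\<in>Bab. bl - {a, b})"
  proof
    show "C \<subseteq> (\<Union>bl\<in>Bab. bl - {a, b})"
    proof
      fix c assume c: "c \<in> C"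
      obtain bl where "bl \<in> B" "{a, b, c} \<subseteq> bl" using uniq[OF T3[OF c]] by blast
      moreover have "c \<noteq> a" "c \<noteq> b" using c a b G2 unfolding C_def by auto
      ultimately show "c \<in> (\<Union>bl\<in>Bab. bl - {a, b})" unfolding Bab_def by auto
    qed
  next
    show "(\<Union>bl\<in>Bab. bl - {a, b}) \<subseteq> C"
    proof
      fix c assume "c \<in> (\<Union>bl\<in>Bab. bl - {a, b})"
      then obtain bl where bl: "bl \<in> B" "a \<in> bl" "b \<in> bl" "c \<in> bl" "c \<noteq> a" "c \<noteq> b"
        unfolding Bab_def by auto
      have "c \<notin> G1" using trans_same[of G bl G1 c a] blk[OF bl(1)] bl G1 a by auto
      moreover have "c \<notin> G2" using trans_same[of G bl G2 c b] blk[OF bl(1)] bl G2 by auto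
      ultimately show "c \<in> C" unfolding C_def using blk[OF bl(1)] bl by auto
    qed
  qed
  have fBab: "finite Bab"
  proof -
    have "Bab \<subseteq> Pow Q" unfolding Bab_def using blk by auto
    then show ?thesis using fQ finite_subset by blast
  qed
  have disj: "\<forall>i\<in>Bab. \<forall>j\<in>Bab. i \<noteq> j \<longrightarrow> (i - {a, b}) \<inter> (j - {a, b}) = {}"
  proof (intro ballI impI)
    fix i j assume ij: "i \<in> Bab" "j \<in> Bab" "i \<noteq> j"
    show "(i - {a, b}) \<inter> (j - {a, b}) = {}"
    proof (rule ccontr)
      assume "(i - {a, b}) \<inter> (j - {a, b}) \<noteq> {}"
      then obtain c where c: "c \<in> i" "c \<in> j" "c \<noteq> a" "c \<noteq> b" by blast
      have "c \<in> C" using part c ij by blast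
      then have "\<exists>!bl. bl \<in> B \<and> {a, b, c} \<subseteq> bl" using uniq T3 by blast
      moreover have "i \<in> B \<and> {a, b, c} \<subseteq> i" "j \<in> B \<and> {a, b, c} \<subseteq> j"
        using ij c unfolding Bab_def by auto
      ultimately show False using ij(3) by blast
    qed
  qed
  have c2: "card (i - {a, b}) = 2" if "i \<in> Bab" for i
  proof -
    have "card i = 4" "finite i" "a \<in> i" "b \<in> i" using that blk unfolding Bab_def by auto
    moreover have "a \<noteq> b" using a b by auto
    ultimately show ?thesis by (simp add: card_Diff_subset)
  qed
  have "card C = (\<Sum>i\<in>Bab. card (i - {a, b}))"
    unfolding part using fBab disj blk unfolding Bab_def by (intro card_UN_disjoint) auto
  also have "\<dots> = 2 * card Bab" using c2 by simp
  finally have "5 * g = 2 * card Bab" using cC by simp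
  then show "even g" by presburger
qed

theorem lemma13:
  fixes g :: nat
  assumes "g > 0"
  shows "(\<exists>(Q :: nat set) G L. large_H_set 7 g 4 3 Q G L) \<longleftrightarrow> even g"
proof
  assume "\<exists>(Q :: nat set) G L. large_H_set 7 g 4 3 Q G L"
  then obtain Q :: "nat set" and G L where "large_H_set 7 g 4 3 Q G L" by blast
  then show "even g" using nec assms by blast
next
  assume "even g"
  then show "\<exists>(Q :: nat set) G L. large_H_set 7 g 4 3 Q G L" using suff assms by blast
qed

end
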